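(* Let $G$ be a finite group, $R\subseteq\mathbb{R}^G$ the space of real matrix coefficients $R_\rho$ of some self-conjugate representation $\rho$ of $G$, and $W=(A,B,C)$, $A,B,C\in\mathbb{R}^{m\times G}$. Suppose $\{1,\dots,m\}=S_1\sqcup S_2$ such that for $i\in S_1$ the $i$-th rows of $A,B,C$ lie in $R$ and for $i\in S_2$ the $i$-th rows of $A,B,C$ lie in $R^\perp$. Then for every $\eta>0$ the same property (with the same $S_1,S_2$) holds for $\mathrm{GD}(W)$, and hence for $\mathrm{GD}^t(W)$ for all $t\ge0$.
   Context: A representation is a homomorphism $\rho:G\to GL(\mathbb{C}^d)$; it is self-conjugate if isomorphic to its entrywise conjugate. For such $\rho$, $R_\rho\subseteq\mathbb{R}^G$ is the real span of the real and imaginary parts of the functions $g\mapsto\rho(g)_{ij}$, $i,j\in[d]$. $R^\perp$ is the orthogonal complement in $\mathbb{R}^G$ with the standard inner product. The Hadamard model computes $f_{\mathrm{HD}}(x,y;W)=C^T(Ax\odot By)$ ($\odot$ entrywise product); $1_g$ is the indicator vector of $g$; the loss is $L(W)=\frac{1}{|G|^3}\sum_{a,b\in G}\|f_{\mathrm{HD}}(1_a,1_b;W)-1_{ab}\|_2^2$, and $\mathrm{GD}(W)=W-\eta\nabla_WL(W)$ with $\mathrm{GD}^t$ its $t$-fold iterate. *)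

theory Defs
  imports "HOL-Algebra.Group" "Jordan_Normal_Form.Matrix" "Jordan_Normal_Form.Determinant" "HOL-Analysis.Derivative"
begin

definition is_rep :: "('a, 'b) monoid_scheme \<Rightarrow> nat \<Rightarrow> ('a \<Rightarrow> complex mat) \<Rightarrow> bool" where
  "is_rep G d \<rho> \<longleftrightarrow>
     (\<forall>g\<in>carrier G. \<rho> g \<in> carrier_mat d d \<and> invertible_mat (\<rho> g)) \<and>
     (\<forall>g\<in>carrier G. \<forall>h\<in>carrier G. \<rho> (g \<otimes>\<^bsub>G\<^esub> h) = \<rho> g * \<rho> h)"

text \<open>Self-conjugate: isomorphic to the entrywise conjugate representation,
  i.e. there is an invertible intertwiner P with P rho(g) P^-1 = conj(rho(g)).\<close>
definition self_conjugate :: "('a, 'b) monoid_scheme \<Rightarrow> nat \<Rightarrow> ('a \<Rightarrow> complex mat) \<Rightarrow> bool" where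
  "self_conjugate G d \<rho> \<longleftrightarrow>
     (\<exists>P \<in> carrier_mat d d. invertible_mat P \<and>
        (\<forall>g\<in>carrier G. P * \<rho> g = map_mat cnj (\<rho> g) * P))"

text \<open>Membership of a function G -> R (only its values on carrier G matter) in R_rho,
  the real span of the real and imaginary parts of the matrix coefficients.\<close>
definition in_R :: "('a, 'b) monoid_scheme \<Rightarrow> nat \<Rightarrow> ('a \<Rightarrow> complex mat) \<Rightarrow> ('a \<Rightarrow> real) \<Rightarrow> bool" where
  "in_R G d \<rho> v \<longleftrightarrow>
     (\<exists>c c' :: nat \<Rightarrow> nat \<Rightarrow> real. \<forall>g\<in>carrier G.
        v g = (\<Sum>i<d. \<Sum>j<d. c i j * Re (\<rho> g $$ (i, j)) + c' i j * Im (\<rho> g $$ (i, j))))"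

definition in_Rperp :: "('a, 'b) monoid_scheme \<Rightarrow> nat \<Rightarrow> ('a \<Rightarrow> complex mat) \<Rightarrow> ('a \<Rightarrow> real) \<Rightarrow> bool" where
  "in_Rperp G d \<rho> v \<longleftrightarrow>
     (\<forall>f. in_R G d \<rho> f \<longrightarrow> (\<Sum>g\<in>carrier G. v g * f g) = 0)"

text \<open>Weights W = (A, B, C), each a matrix in R^{m x G} given as row index -> group element -> real.\<close>
type_synonym 'a weights = "(nat \<Rightarrow> 'a \<Rightarrow> real) \<times> (nat \<Rightarrow> 'a \<Rightarrow> real) \<times> (nat \<Rightarrow> 'a \<Rightarrow> real)"

text \<open>g-th output coordinate of f_HD(1_a, 1_b; W) = C^T (A 1_a \<odot> B 1_b).\<close>
definition f_HD :: "nat \<Rightarrow> 'a weights \<Rightarrow> 'a \<Rightarrow> 'a \<Rightarrow> 'a \<Rightarrow> real" where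
  "f_HD m W a b g = (case W of (A, B, C) \<Rightarrow> (\<Sum>i<m. C i g * (A i a * B i b)))"

definition loss :: "('a, 'b) monoid_scheme \<Rightarrow> nat \<Rightarrow> 'a weights \<Rightarrow> real" where
  "loss G m W = 1 / real (card (carrier G)) ^ 3 *
     (\<Sum>a\<in>carrier G. \<Sum>b\<in>carrier G. \<Sum>g\<in>carrier G.
        (f_HD m W a b g - (if g = a \<otimes>\<^bsub>G\<^esub> b then 1 else 0))\<^sup>2)"

definition GD :: "('a, 'b) monoid_scheme \<Rightarrow> nat \<Rightarrow> real \<Rightarrow> 'a weights \<Rightarrow> 'a weights" where
  "GD G m \<eta> W = (case W of (A, B, C) \<Rightarrow>
     ((\<lambda>i a. A i a - \<eta> * deriv (\<lambda>t. loss G m (A(i := (A i)(a := t)), B, C)) (A i a)),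
      (\<lambda>i a. B i a - \<eta> * deriv (\<lambda>t. loss G m (A, B(i := (B i)(a := t)), C)) (B i a)),
      (\<lambda>i a. C i a - \<eta> * deriv (\<lambda>t. loss G m (A, B, C(i := (C i)(a := t)))) (C i a))))"

definition rows_split :: "('a, 'b) monoid_scheme \<Rightarrow> nat \<Rightarrow> ('a \<Rightarrow> complex mat) \<Rightarrow> nat set \<Rightarrow> nat set \<Rightarrow> 'a weights \<Rightarrow> bool" where
  "rows_split G d \<rho> S1 S2 W = (case W of (A, B, C) \<Rightarrow>
     (\<forall>i\<in>S1. in_R G d \<rho> (A i) \<and> in_R G d \<rho> (B i) \<and> in_R G d \<rho> (C i)) \<and>
     (\<forall>i\<in>S2. in_Rperp G d \<rho> (A i) \<and> in_Rperp G d \<rho> (B i) \<and> in_Rperp G d \<rho> (C i)))"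

end

theory Submission
  imports Defs
begin

lemma in_R_complex:
  "in_R G d \<rho> v \<longleftrightarrow>
   (\<exists>z :: nat \<Rightarrow> nat \<Rightarrow> complex. \<forall>g\<in>carrier G.
      v g = Re (\<Sum>i<d. \<Sum>j<d. z i j * \<rho> g $$ (i, j)))"
proof
  assume "in_R G d \<rho> v"
  then obtain c c' where h: "\<forall>g\<in>carrier G.
        v g = (\<Sum>i<d. \<Sum>j<d. c i j * Re (\<rho> g $$ (i, j)) + c' i j * Im (\<rho> g $$ (i, j)))"
    unfolding in_R_def by blast
  show "\<exists>z :: nat \<Rightarrow> nat \<Rightarrow> complex. \<forall>g\<in>carrier G.
      v g = Re (\<Sum>i<d. \<Sum>j<d. z i j * \<rho> g $$ (i, j))"
  proof (intro exI ballI)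
    fix g assume g: "g \<in> carrier G"
    show "v g = Re (\<Sum>i<d. \<Sum>j<d. Complex (c i j) (- c' i j) * \<rho> g $$ (i, j))"
      by (simp add: h g Re_sum)
  qed
next
  assume "\<exists>z :: nat \<Rightarrow> nat \<Rightarrow> complex. \<forall>g\<in>carrier G.
      v g = Re (\<Sum>i<d. \<Sum>j<d. z i j * \<rho> g $$ (i, j))"
  then obtain z where h: "\<forall>g\<in>carrier G. v g = Re (\<Sum>i<d. \<Sum>j<d. z i j * \<rho> g $$ (i, j))"
    by blast
  show "in_R G d \<rho> v" unfolding in_R_def
  proof (intro exI ballI)
    fix g assume g: "g \<in> carrier G"
    show "v g = (\<Sum>i<d. \<Sum>j<d. Re (z i j) * Re (\<rho> g $$ (i, j)) + (- Im (z i j)) * Im (\<rho> g $$ (i, j)))"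
      by (simp add: h g Re_sum)
  qed
qed

lemma in_R_cong:
  assumes "in_R G d \<rho> v" "\<And>g. g \<in> carrier G \<Longrightarrow> v g = w g"
  shows "in_R G d \<rho> w"
proof -
  from assms(1) obtain c c' where h: "\<forall>g\<in>carrier G.
        v g = (\<Sum>i<d. \<Sum>j<d. c i j * Re (\<rho> g $$ (i, j)) + c' i j * Im (\<rho> g $$ (i, j)))"
    unfolding in_R_def by blast
  show ?thesis unfolding in_R_def
    by (rule exI[of _ c], rule exI[of _ c']) (use h assms(2) in auto)
qed

lemma in_R_zero: "in_R G d \<rho> (\<lambda>g. 0)"
  unfolding in_R_def by (rule exI[of _ "\<lambda>i j. 0"], rule exI[of _ "\<lambda>i j. 0"]) simp

lemma in_R_add: "in_R G d \<rho> v \<Longrightarrow> in_R G d \<rho> w \<Longrightarrow> in_R G d \<rho> (\<lambda>g. v g + w g)"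
proof -
  assume "in_R G d \<rho> v" "in_R G d \<rho> w"
  then obtain z1 z2 where h1: "\<forall>g\<in>carrier G. v g = Re (\<Sum>i<d. \<Sum>j<d. z1 i j * \<rho> g $$ (i, j))"
    and h2: "\<forall>g\<in>carrier G. w g = Re (\<Sum>i<d. \<Sum>j<d. z2 i j * \<rho> g $$ (i, j))"
    unfolding in_R_complex by blast
  show ?thesis unfolding in_R_complex
    by (rule exI[of _ "\<lambda>i j. z1 i j + z2 i j"]) (simp add: h1 h2 distrib_right sum.distrib)
qed

lemma in_R_scale: "in_R G d \<rho> v \<Longrightarrow> in_R G d \<rho> (\<lambda>g. r * v g)"
proof -
  assume "in_R G d \<rho> v"
  then obtain z1 where h1: "\<forall>g\<in>carrier G. v g = Re (\<Sum>i<d. \<Sum>j<d. z1 i j * \<rho> g $$ (i, j))"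
    unfolding in_R_complex by blast
  show ?thesis unfolding in_R_complex
    by (rule exI[of _ "\<lambda>i j. of_real r * z1 i j"]) (simp add: h1 sum_distrib_left mult.assoc Re_sum)
qed

lemma in_R_scale': "in_R G d \<rho> v \<Longrightarrow> in_R G d \<rho> (\<lambda>g. v g * r)"
  using in_R_scale[of G d \<rho> v r] by (simp add: mult.commute)

lemma in_R_sum: "finite S \<Longrightarrow> (\<And>j. j \<in> S \<Longrightarrow> in_R G d \<rho> (v j)) \<Longrightarrow> in_R G d \<rho> (\<lambda>g. \<Sum>j\<in>S. v j g)"
  by (induction S rule: finite_induct) (auto intro: in_R_zero in_R_add)

lemma in_R_diff: "in_R G d \<rho> v \<Longrightarrow> in_R G d \<rho> w \<Longrightarrow> in_R G d \<rho> (\<lambda>g. v g - w g)"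
  using in_R_add[of G d \<rho> v "\<lambda>g. (-1) * w g"] in_R_scale[of G d \<rho> w "-1"] by simp

lemma in_Rperp_cong:
  assumes "in_Rperp G d \<rho> v" "\<And>g. g \<in> carrier G \<Longrightarrow> v g = w g"
  shows "in_Rperp G d \<rho> w"
  unfolding in_Rperp_def
proof (intro allI impI)
  fix f assume f: "in_R G d \<rho> f"
  have "(\<Sum>g\<in>carrier G. w g * f g) = (\<Sum>g\<in>carrier G. v g * f g)"
    using assms(2) by (intro sum.cong) auto
  also have "\<dots> = 0" using assms(1) f unfolding in_Rperp_def by blast
  finally show "(\<Sum>g\<in>carrier G. w g * f g) = 0" .
qed

lemma in_Rperp_zero: "in_Rperp G d \<rho> (\<lambda>g. 0)"
  unfolding in_Rperp_def by simp

lemma in_Rperp_add: "in_Rperp G d \<rho> v \<Longrightarrow> in_Rperp G d \<rho> w \<Longrightarrow> in_Rperp G d \<rho> (\<lambda>g. v g + w g)"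
  unfolding in_Rperp_def by (simp add: distrib_right sum.distrib)

lemma in_Rperp_scale: "in_Rperp G d \<rho> v \<Longrightarrow> in_Rperp G d \<rho> (\<lambda>g. r * v g)"
  unfolding in_Rperp_def by (simp add: mult.assoc flip: sum_distrib_left)

lemma in_Rperp_scale': "in_Rperp G d \<rho> v \<Longrightarrow> in_Rperp G d \<rho> (\<lambda>g. v g * r)"
  using in_Rperp_scale[of G d \<rho> v r] by (simp add: mult.commute)

lemma in_Rperp_sum: "finite S \<Longrightarrow> (\<And>j. j \<in> S \<Longrightarrow> in_Rperp G d \<rho> (v j)) \<Longrightarrow> in_Rperp G d \<rho> (\<lambda>g. \<Sum>j\<in>S. v j g)"
  by (induction S rule: finite_induct) (auto intro: in_Rperp_zero in_Rperp_add)

lemma in_Rperp_diff: "in_Rperp G d \<rho> v \<Longrightarrow> in_Rperp G d \<rho> w \<Longrightarrow> in_Rperp G d \<rho> (\<lambda>g. v g - w g)"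
  using in_Rperp_add[of G d \<rho> v "\<lambda>g. (-1) * w g"] in_Rperp_scale[of G d \<rho> w "-1"] by simp

lemma perp_orth: "in_Rperp G d \<rho> v \<Longrightarrow> in_R G d \<rho> w \<Longrightarrow> (\<Sum>g\<in>carrier G. v g * w g) = 0"
  unfolding in_Rperp_def by blast

lemma perp_orth': "in_Rperp G d \<rho> v \<Longrightarrow> in_R G d \<rho> w \<Longrightarrow> (\<Sum>g\<in>carrier G. w g * v g) = 0"
proof -
  assume "in_Rperp G d \<rho> v" "in_R G d \<rho> w"
  then have "(\<Sum>g\<in>carrier G. v g * w g) = 0" by (rule perp_orth)
  moreover have "(\<Sum>g\<in>carrier G. w g * v g) = (\<Sum>g\<in>carrier G. v g * w g)"
    by (rule sum.cong) auto
  ultimately show ?thesis by simp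
qed

lemma rep_mult_entry:
  assumes "is_rep G d \<rho>" "a \<in> carrier G" "b \<in> carrier G" "k < d" "l < d"
  shows "\<rho> (a \<otimes>\<^bsub>G\<^esub> b) $$ (k, l) = (\<Sum>p<d. \<rho> a $$ (k, p) * \<rho> b $$ (p, l))"
proof -
  have "\<rho> a \<in> carrier_mat d d" "\<rho> b \<in> carrier_mat d d" using assms unfolding is_rep_def by auto
  moreover have "\<rho> (a \<otimes>\<^bsub>G\<^esub> b) = \<rho> a * \<rho> b" using assms unfolding is_rep_def by auto
  ultimately show ?thesis using assms(4,5)
    by (simp add: scalar_prod_def lessThan_atLeast0)
qed

lemma in_R_right:
  assumes "is_rep G d \<rho>" "monoid G" "in_R G d \<rho> v" "b \<in> carrier G"
  shows "in_R G d \<rho> (\<lambda>a. v (a \<otimes>\<^bsub>G\<^esub> b))"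
proof -
  obtain z where h: "\<forall>g\<in>carrier G. v g = Re (\<Sum>i<d. \<Sum>j<d. z i j * \<rho> g $$ (i, j))"
    using assms(3) unfolding in_R_complex by blast
  show ?thesis unfolding in_R_complex
  proof (rule exI[of _ "\<lambda>k p. \<Sum>l<d. z k l * \<rho> b $$ (p, l)"], intro ballI)
    fix a assume a: "a \<in> carrier G"
    have "v (a \<otimes>\<^bsub>G\<^esub> b) = Re (\<Sum>i<d. \<Sum>j<d. z i j * (\<Sum>p<d. \<rho> a $$ (i, p) * \<rho> b $$ (p, j)))"
      using h a assms(2,4) rep_mult_entry[OF assms(1) a assms(4)] by (simp add: monoid.m_closed)
    also have "(\<Sum>i<d. \<Sum>j<d. z i j * (\<Sum>p<d. \<rho> a $$ (i, p) * \<rho> b $$ (p, j)))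
       = (\<Sum>i<d. \<Sum>p<d. (\<Sum>j<d. z i j * \<rho> b $$ (p, j)) * \<rho> a $$ (i, p))"
      apply (rule sum.cong, simp)
      apply (simp only: sum_distrib_left sum_distrib_right)
      apply (subst sum.swap)
      by (simp add: mult_ac)
    finally show "v (a \<otimes>\<^bsub>G\<^esub> b) = Re (\<Sum>i<d. \<Sum>j<d. (\<Sum>l<d. z i l * \<rho> b $$ (j, l)) * \<rho> a $$ (i, j))" .
  qed
qed

lemma in_R_left:
  assumes "is_rep G d \<rho>" "monoid G" "in_R G d \<rho> v" "a \<in> carrier G"
  shows "in_R G d \<rho> (\<lambda>b. v (a \<otimes>\<^bsub>G\<^esub> b))"
proof -
  obtain z where h: "\<forall>g\<in>carrier G. v g = Re (\<Sum>i<d. \<Sum>j<d. z i j * \<rho> g $$ (i, j))"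
    using assms(3) unfolding in_R_complex by blast
  show ?thesis unfolding in_R_complex
  proof (rule exI[of _ "\<lambda>p l. \<Sum>k<d. z k l * \<rho> a $$ (k, p)"], intro ballI)
    fix b assume b: "b \<in> carrier G"
    have "v (a \<otimes>\<^bsub>G\<^esub> b) = Re (\<Sum>i<d. \<Sum>j<d. z i j * (\<Sum>p<d. \<rho> a $$ (i, p) * \<rho> b $$ (p, j)))"
      using h b assms(2,4) rep_mult_entry[OF assms(1) assms(4) b] by (simp add: monoid.m_closed)
    also have "(\<Sum>i<d. \<Sum>j<d. z i j * (\<Sum>p<d. \<rho> a $$ (i, p) * \<rho> b $$ (p, j)))
       = (\<Sum>p<d. \<Sum>j<d. (\<Sum>i<d. z i j * \<rho> a $$ (i, p)) * \<rho> b $$ (p, j))"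
    proof -
      have "(\<Sum>i<d. \<Sum>j<d. z i j * (\<Sum>p<d. \<rho> a $$ (i, p) * \<rho> b $$ (p, j)))
          = (\<Sum>i<d. \<Sum>j<d. \<Sum>p<d. z i j * \<rho> a $$ (i, p) * \<rho> b $$ (p, j))"
        by (simp add: sum_distrib_left mult.assoc)
      also have "\<dots> = (\<Sum>i<d. \<Sum>p<d. \<Sum>j<d. z i j * \<rho> a $$ (i, p) * \<rho> b $$ (p, j))"
        by (rule sum.cong[OF refl], rule sum.swap)
      also have "\<dots> = (\<Sum>p<d. \<Sum>i<d. \<Sum>j<d. z i j * \<rho> a $$ (i, p) * \<rho> b $$ (p, j))"
        by (rule sum.swap)
      also have "\<dots> = (\<Sum>p<d. \<Sum>j<d. \<Sum>i<d. z i j * \<rho> a $$ (i, p) * \<rho> b $$ (p, j))"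
        by (rule sum.cong[OF refl], rule sum.swap)
      also have "\<dots> = (\<Sum>p<d. \<Sum>j<d. (\<Sum>i<d. z i j * \<rho> a $$ (i, p)) * \<rho> b $$ (p, j))"
        by (simp add: sum_distrib_right)
      finally show ?thesis .
    qed
    finally show "v (a \<otimes>\<^bsub>G\<^esub> b) = Re (\<Sum>i<d. \<Sum>j<d. (\<Sum>k<d. z k j * \<rho> a $$ (k, i)) * \<rho> b $$ (i, j))" .
  qed
qed


lemma deriv_sumsq:
  fixes P Q :: "'x \<Rightarrow> 'y \<Rightarrow> 'z \<Rightarrow> real"
  assumes "\<And>t. h t = c * (\<Sum>a\<in>X. \<Sum>b\<in>Y. \<Sum>g\<in>Z. (P a b g + Q a b g * t)\<^sup>2)"
  shows "deriv h t0 = c * (\<Sum>a\<in>X. \<Sum>b\<in>Y. \<Sum>g\<in>Z. 2 * (P a b g + Q a b g * t0) * Q a b g)"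
proof -
  have e: "h = (\<lambda>t. c * (\<Sum>a\<in>X. \<Sum>b\<in>Y. \<Sum>g\<in>Z. (P a b g + Q a b g * t)\<^sup>2))"
    using assms by auto
  have "((\<lambda>t. c * (\<Sum>a\<in>X. \<Sum>b\<in>Y. \<Sum>g\<in>Z. (P a b g + Q a b g * t)\<^sup>2)) has_real_derivative
      c * (\<Sum>a\<in>X. \<Sum>b\<in>Y. \<Sum>g\<in>Z. 2 * (P a b g + Q a b g * t0) * Q a b g)) (at t0)"
  proof -
    have d1: "((\<lambda>t. (p + q * t)\<^sup>2) has_real_derivative 2 * (p + q * t0) * q) (at t0)" for p q :: real
      by (auto intro!: derivative_eq_intros simp: algebra_simps)
    show ?thesis by (intro DERIV_cmult DERIV_sum d1)
  qed
  then show ?thesis unfolding e by (rule DERIV_imp_deriv)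
qed

lemma sum_if0: "(\<Sum>x\<in>S. if P then f x else (0::real)) = (if P then sum f S else 0)"
  by auto

lemma mult_if0: "x * (if P then y else (0::real)) = (if P then x * y else 0)"
  by auto

lemma fHD_updA:
  assumes "i < m"
  shows "f_HD m (A(i := (A i)(a0 := t)), B, C) a b g
       = f_HD m (A, B, C) a b g + (if a = a0 then C i g * B i b else 0) * (t - A i a0)"
proof -
  have "(\<Sum>j<m. C j g * ((A(i := (A i)(a0 := t))) j a * B j b))
     = (\<Sum>j<m. C j g * (A j a * B j b) + (if j = i then (if a = a0 then C i g * B i b else 0) * (t - A i a0) else 0))"
    by (rule sum.cong) (auto simp: algebra_simps)
  also have "\<dots> = (\<Sum>j<m. C j g * (A j a * B j b)) + (if a = a0 then C i g * B i b else 0) * (t - A i a0)"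
    using assms by (simp add: sum.distrib)
  finally show ?thesis unfolding f_HD_def by simp
qed

lemma fHD_updB:
  assumes "i < m"
  shows "f_HD m (A, B(i := (B i)(b0 := t)), C) a b g
       = f_HD m (A, B, C) a b g + (if b = b0 then C i g * A i a else 0) * (t - B i b0)"
proof -
  have "(\<Sum>j<m. C j g * (A j a * (B(i := (B i)(b0 := t))) j b))
     = (\<Sum>j<m. C j g * (A j a * B j b) + (if j = i then (if b = b0 then C i g * A i a else 0) * (t - B i b0) else 0))"
    by (rule sum.cong) (auto simp: algebra_simps)
  also have "\<dots> = (\<Sum>j<m. C j g * (A j a * B j b)) + (if b = b0 then C i g * A i a else 0) * (t - B i b0)"
    using assms by (simp add: sum.distrib)
  finally show ?thesis unfolding f_HD_def by simp
qed

lemma fHD_updC: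
  assumes "i < m"
  shows "f_HD m (A, B, C(i := (C i)(g0 := t))) a b g
       = f_HD m (A, B, C) a b g + (if g = g0 then A i a * B i b else 0) * (t - C i g0)"
proof -
  have "(\<Sum>j<m. (C(i := (C i)(g0 := t))) j g * (A j a * B j b))
     = (\<Sum>j<m. C j g * (A j a * B j b) + (if j = i then (if g = g0 then A i a * B i b else 0) * (t - C i g0) else 0))"
    by (rule sum.cong) (auto simp: algebra_simps)
  also have "\<dots> = (\<Sum>j<m. C j g * (A j a * B j b)) + (if g = g0 then A i a * B i b else 0) * (t - C i g0)"
    using assms by (simp add: sum.distrib)
  finally show ?thesis unfolding f_HD_def by simp
qed

lemma deriv_A:
  assumes "i < m" "finite (carrier G)" "a0 \<in> carrier G"
  shows "deriv (\<lambda>t. loss G m (A(i := (A i)(a0 := t)), B, C)) (A i a0)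
    = 1 / real (card (carrier G)) ^ 3 * (\<Sum>b\<in>carrier G. \<Sum>g\<in>carrier G.
        2 * (f_HD m (A, B, C) a0 b g - (if g = a0 \<otimes>\<^bsub>G\<^esub> b then 1 else 0)) * (C i g * B i b))"
proof -
  define Q where "Q a b g = (if a = a0 then C i g * B i b else 0)" for a b g
  define P where "P a b g = f_HD m (A, B, C) a b g - (if g = a \<otimes>\<^bsub>G\<^esub> b then 1 else 0) - Q a b g * A i a0" for a b g
  have "deriv (\<lambda>t. loss G m (A(i := (A i)(a0 := t)), B, C)) (A i a0)
    = 1 / real (card (carrier G)) ^ 3 * (\<Sum>a\<in>carrier G. \<Sum>b\<in>carrier G. \<Sum>g\<in>carrier G. 2 * (P a b g + Q a b g * A i a0) * Q a b g)"
    by (rule deriv_sumsq) (simp add: loss_def fHD_updA[OF assms(1)] P_def Q_def algebra_simps)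
  also have "\<dots> = 1 / real (card (carrier G)) ^ 3 * (\<Sum>b\<in>carrier G. \<Sum>g\<in>carrier G.
        2 * (f_HD m (A, B, C) a0 b g - (if g = a0 \<otimes>\<^bsub>G\<^esub> b then 1 else 0)) * (C i g * B i b))"
    using assms by (simp add: P_def Q_def mult_if0 sum_if0 sum.delta' del: mult_2)
  finally show ?thesis .
qed

lemma deriv_B:
  assumes "i < m" "finite (carrier G)" "b0 \<in> carrier G"
  shows "deriv (\<lambda>t. loss G m (A, B(i := (B i)(b0 := t)), C)) (B i b0)
    = 1 / real (card (carrier G)) ^ 3 * (\<Sum>a\<in>carrier G. \<Sum>g\<in>carrier G.
        2 * (f_HD m (A, B, C) a b0 g - (if g = a \<otimes>\<^bsub>G\<^esub> b0 then 1 else 0)) * (C i g * A i a))"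
proof -
  define Q where "Q a b g = (if b = b0 then C i g * A i a else 0)" for a b g
  define P where "P a b g = f_HD m (A, B, C) a b g - (if g = a \<otimes>\<^bsub>G\<^esub> b then 1 else 0) - Q a b g * B i b0" for a b g
  have "deriv (\<lambda>t. loss G m (A, B(i := (B i)(b0 := t)), C)) (B i b0)
    = 1 / real (card (carrier G)) ^ 3 * (\<Sum>a\<in>carrier G. \<Sum>b\<in>carrier G. \<Sum>g\<in>carrier G. 2 * (P a b g + Q a b g * B i b0) * Q a b g)"
    by (rule deriv_sumsq) (simp add: loss_def fHD_updB[OF assms(1)] P_def Q_def algebra_simps)
  also have "\<dots> = 1 / real (card (carrier G)) ^ 3 * (\<Sum>a\<in>carrier G. \<Sum>g\<in>carrier G.
        2 * (f_HD m (A, B, C) a b0 g - (if g = a \<otimes>\<^bsub>G\<^esub> b0 then 1 else 0)) * (C i g * A i a))"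
    using assms by (simp add: P_def Q_def mult_if0 sum_if0 sum.delta' del: mult_2)
  finally show ?thesis .
qed

lemma deriv_C:
  assumes "i < m" "finite (carrier G)" "g0 \<in> carrier G"
  shows "deriv (\<lambda>t. loss G m (A, B, C(i := (C i)(g0 := t)))) (C i g0)
    = 1 / real (card (carrier G)) ^ 3 * (\<Sum>a\<in>carrier G. \<Sum>b\<in>carrier G.
        2 * (f_HD m (A, B, C) a b g0 - (if g0 = a \<otimes>\<^bsub>G\<^esub> b then 1 else 0)) * (A i a * B i b))"
proof -
  define Q where "Q a b g = (if g = g0 then A i a * B i b else 0)" for a b g
  define P where "P a b g = f_HD m (A, B, C) a b g - (if g = a \<otimes>\<^bsub>G\<^esub> b then 1 else 0) - Q a b g * C i g0" for a b g
  have "deriv (\<lambda>t. loss G m (A, B, C(i := (C i)(g0 := t)))) (C i g0)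
    = 1 / real (card (carrier G)) ^ 3 * (\<Sum>a\<in>carrier G. \<Sum>b\<in>carrier G. \<Sum>g\<in>carrier G. 2 * (P a b g + Q a b g * C i g0) * Q a b g)"
    by (rule deriv_sumsq) (simp add: loss_def fHD_updC[OF assms(1)] P_def Q_def algebra_simps)
  also have "\<dots> = 1 / real (card (carrier G)) ^ 3 * (\<Sum>a\<in>carrier G. \<Sum>b\<in>carrier G.
        2 * (f_HD m (A, B, C) a b g0 - (if g0 = a \<otimes>\<^bsub>G\<^esub> b then 1 else 0)) * (A i a * B i b))"
    using assms by (simp add: P_def Q_def mult_if0 sum_if0 sum.delta' del: mult_2)
  finally show ?thesis .
qed


lemma sum_right_transl:
  assumes "group G" "b \<in> carrier G"
  shows "(\<Sum>a\<in>carrier G. F (a \<otimes>\<^bsub>G\<^esub> b)) = (\<Sum>a\<in>carrier G. F a)"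
proof -
  interpret group G by fact
  show ?thesis
    by (rule sum.reindex_bij_witness[where i="\<lambda>a. a \<otimes>\<^bsub>G\<^esub> inv\<^bsub>G\<^esub> b" and j="\<lambda>a. a \<otimes>\<^bsub>G\<^esub> b"])
      (auto simp: m_assoc assms(2))
qed

lemma sum_left_transl:
  assumes "group G" "a \<in> carrier G"
  shows "(\<Sum>b\<in>carrier G. F (a \<otimes>\<^bsub>G\<^esub> b)) = (\<Sum>b\<in>carrier G. F b)"
proof -
  interpret group G by fact
  show ?thesis
    by (rule sum.reindex_bij_witness[where i="\<lambda>b. inv\<^bsub>G\<^esub> a \<otimes>\<^bsub>G\<^esub> b" and j="\<lambda>b. a \<otimes>\<^bsub>G\<^esub> b"])
      (auto simp: m_assoc[symmetric] assms(2))
qed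

lemma swap_mul: "(\<Sum>x\<in>S. (\<Sum>y\<in>T. F x y) * (h x::real)) = (\<Sum>y\<in>T. \<Sum>x\<in>S. F x y * h x)"
  apply (simp only: sum_distrib_right)
  by (rule sum.swap)

lemma convA_R:
  assumes "group G" "finite (carrier G)" "is_rep G d \<rho>" "in_R G d \<rho> C"
  shows "in_R G d \<rho> (\<lambda>a. \<Sum>b\<in>carrier G. C (a \<otimes>\<^bsub>G\<^esub> b) * B b)"
  using assms by (intro in_R_sum in_R_scale' in_R_right) (auto simp: group.is_monoid)

lemma convB_R:
  assumes "group G" "finite (carrier G)" "is_rep G d \<rho>" "in_R G d \<rho> C"
  shows "in_R G d \<rho> (\<lambda>b. \<Sum>a\<in>carrier G. A a * C (a \<otimes>\<^bsub>G\<^esub> b))"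
  using assms by (intro in_R_sum in_R_scale in_R_left) (auto simp: group.is_monoid)

lemma convC_R:
  assumes "group G" "finite (carrier G)" "is_rep G d \<rho>" "in_R G d \<rho> B"
  shows "in_R G d \<rho> (\<lambda>g. \<Sum>a\<in>carrier G. A a * B (inv\<^bsub>G\<^esub> a \<otimes>\<^bsub>G\<^esub> g))"
  using assms by (intro in_R_sum in_R_scale in_R_left) (auto simp: group.is_monoid)

lemma convA_P:
  assumes "group G" "finite (carrier G)" "is_rep G d \<rho>" "in_Rperp G d \<rho> C"
  shows "in_Rperp G d \<rho> (\<lambda>a. \<Sum>b\<in>carrier G. C (a \<otimes>\<^bsub>G\<^esub> b) * B b)"
  unfolding in_Rperp_def
proof (intro allI impI)
  interpret group G by fact
  fix f assume f: "in_R G d \<rho> f"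
  have "(\<Sum>a\<in>carrier G. (\<Sum>b\<in>carrier G. C (a \<otimes>\<^bsub>G\<^esub> b) * B b) * f a)
     = (\<Sum>b\<in>carrier G. B b * (\<Sum>a\<in>carrier G. C (a \<otimes>\<^bsub>G\<^esub> b) * f a))"
    by (simp only: sum_distrib_right sum_distrib_left, subst sum.swap, simp add: mult_ac)
  also have "\<dots> = 0"
  proof (rule sum.neutral, intro ballI)
    fix b assume b: "b \<in> carrier G"
    have "(\<Sum>a\<in>carrier G. C (a \<otimes>\<^bsub>G\<^esub> b) * f a) = (\<Sum>a\<in>carrier G. (\<lambda>x. C x * f (x \<otimes>\<^bsub>G\<^esub> inv\<^bsub>G\<^esub> b)) (a \<otimes>\<^bsub>G\<^esub> b))"
      using b by (intro sum.cong) (auto simp: m_assoc)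
    also have "\<dots> = (\<Sum>a\<in>carrier G. C a * f (a \<otimes>\<^bsub>G\<^esub> inv\<^bsub>G\<^esub> b))"
      by (rule sum_right_transl[OF assms(1) b])
    also have "\<dots> = 0"
      using assms(4) in_R_right[OF assms(3) is_monoid f inv_closed[OF b]] by (rule perp_orth)
    finally show "B b * (\<Sum>a\<in>carrier G. C (a \<otimes>\<^bsub>G\<^esub> b) * f a) = 0" by simp
  qed
  finally show "(\<Sum>a\<in>carrier G. (\<Sum>b\<in>carrier G. C (a \<otimes>\<^bsub>G\<^esub> b) * B b) * f a) = 0" .
qed

lemma convB_P:
  assumes "group G" "finite (carrier G)" "is_rep G d \<rho>" "in_Rperp G d \<rho> C"
  shows "in_Rperp G d \<rho> (\<lambda>b. \<Sum>a\<in>carrier G. A a * C (a \<otimes>\<^bsub>G\<^esub> b))"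
  unfolding in_Rperp_def
proof (intro allI impI)
  interpret group G by fact
  fix f assume f: "in_R G d \<rho> f"
  have "(\<Sum>b\<in>carrier G. (\<Sum>a\<in>carrier G. A a * C (a \<otimes>\<^bsub>G\<^esub> b)) * f b)
     = (\<Sum>a\<in>carrier G. A a * (\<Sum>b\<in>carrier G. C (a \<otimes>\<^bsub>G\<^esub> b) * f b))"
    by (simp only: sum_distrib_right sum_distrib_left, subst sum.swap, simp add: mult_ac)
  also have "\<dots> = 0"
  proof (rule sum.neutral, intro ballI)
    fix a assume a: "a \<in> carrier G"
    have "(\<Sum>b\<in>carrier G. C (a \<otimes>\<^bsub>G\<^esub> b) * f b) = (\<Sum>b\<in>carrier G. (\<lambda>x. C x * f (inv\<^bsub>G\<^esub> a \<otimes>\<^bsub>G\<^esub> x)) (a \<otimes>\<^bsub>G\<^esub> b))"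
      using a by (intro sum.cong) (auto simp: m_assoc[symmetric])
    also have "\<dots> = (\<Sum>b\<in>carrier G. C b * f (inv\<^bsub>G\<^esub> a \<otimes>\<^bsub>G\<^esub> b))"
      by (rule sum_left_transl[OF assms(1) a])
    also have "\<dots> = 0"
      using assms(4) in_R_left[OF assms(3) is_monoid f inv_closed[OF a]] by (rule perp_orth)
    finally show "A a * (\<Sum>b\<in>carrier G. C (a \<otimes>\<^bsub>G\<^esub> b) * f b) = 0" by simp
  qed
  finally show "(\<Sum>b\<in>carrier G. (\<Sum>a\<in>carrier G. A a * C (a \<otimes>\<^bsub>G\<^esub> b)) * f b) = 0" .
qed

lemma convC_P:
  assumes "group G" "finite (carrier G)" "is_rep G d \<rho>" "in_Rperp G d \<rho> B"
  shows "in_Rperp G d \<rho> (\<lambda>g. \<Sum>a\<in>carrier G. A a * B (inv\<^bsub>G\<^esub> a \<otimes>\<^bsub>G\<^esub> g))"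
  unfolding in_Rperp_def
proof (intro allI impI)
  interpret group G by fact
  fix f assume f: "in_R G d \<rho> f"
  have "(\<Sum>g\<in>carrier G. (\<Sum>a\<in>carrier G. A a * B (inv\<^bsub>G\<^esub> a \<otimes>\<^bsub>G\<^esub> g)) * f g)
     = (\<Sum>a\<in>carrier G. A a * (\<Sum>g\<in>carrier G. B (inv\<^bsub>G\<^esub> a \<otimes>\<^bsub>G\<^esub> g) * f g))"
    by (simp only: sum_distrib_right sum_distrib_left, subst sum.swap, simp add: mult_ac)
  also have "\<dots> = 0"
  proof (rule sum.neutral, intro ballI)
    fix a assume a: "a \<in> carrier G"
    have "(\<Sum>g\<in>carrier G. B (inv\<^bsub>G\<^esub> a \<otimes>\<^bsub>G\<^esub> g) * f g) = (\<Sum>g\<in>carrier G. (\<lambda>x. B x * f (a \<otimes>\<^bsub>G\<^esub> x)) (inv\<^bsub>G\<^esub> a \<otimes>\<^bsub>G\<^esub> g))"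
      using a by (intro sum.cong) (auto simp: m_assoc[symmetric])
    also have "\<dots> = (\<Sum>g\<in>carrier G. B g * f (a \<otimes>\<^bsub>G\<^esub> g))"
      by (rule sum_left_transl[OF assms(1) inv_closed[OF a]])
    also have "\<dots> = 0"
      using assms(4) in_R_left[OF assms(3) is_monoid f a] by (rule perp_orth)
    finally show "A a * (\<Sum>g\<in>carrier G. B (inv\<^bsub>G\<^esub> a \<otimes>\<^bsub>G\<^esub> g) * f g) = 0" by simp
  qed
  finally show "(\<Sum>g\<in>carrier G. (\<Sum>a\<in>carrier G. A a * B (inv\<^bsub>G\<^esub> a \<otimes>\<^bsub>G\<^esub> g)) * f g) = 0" .
qed

lemma triple:
  fixes U V :: "nat \<Rightarrow> 'x \<Rightarrow> real"
  shows "(\<Sum>x\<in>S. \<Sum>y\<in>T. (\<Sum>j\<in>J. U j x * V j y * Z j) * (U i x * V i y))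
       = (\<Sum>j\<in>J. Z j * ((\<Sum>x\<in>S. U j x * U i x) * (\<Sum>y\<in>T. V j y * V i y)))"
proof -
  have "(\<Sum>x\<in>S. \<Sum>y\<in>T. (\<Sum>j\<in>J. U j x * V j y * Z j) * (U i x * V i y))
      = (\<Sum>x\<in>S. \<Sum>y\<in>T. \<Sum>j\<in>J. Z j * ((U j x * U i x) * (V j y * V i y)))"
    by (simp only: sum_distrib_right) (simp add: mult_ac)
  also have "\<dots> = (\<Sum>x\<in>S. \<Sum>j\<in>J. \<Sum>y\<in>T. Z j * ((U j x * U i x) * (V j y * V i y)))"
    by (rule sum.cong[OF refl], rule sum.swap)
  also have "\<dots> = (\<Sum>j\<in>J. \<Sum>x\<in>S. \<Sum>y\<in>T. Z j * ((U j x * U i x) * (V j y * V i y)))"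
    by (rule sum.swap)
  also have "\<dots> = (\<Sum>j\<in>J. Z j * ((\<Sum>x\<in>S. U j x * U i x) * (\<Sum>y\<in>T. V j y * V i y)))"
    by (rule sum.cong[OF refl]) (simp only: sum_product, simp add: sum_distrib_left mult.assoc)
  finally show ?thesis .
qed


lemma if10_mult: "(if P then 1 else 0) * (x::real) = (if P then x else 0)"
  by simp

lemma deriv_A':
  assumes "group G" "i < m" "finite (carrier G)" "a0 \<in> carrier G"
  shows "deriv (\<lambda>t. loss G m (A(i := (A i)(a0 := t)), B, C)) (A i a0)
    = 1 / real (card (carrier G)) ^ 3 * (2 * (\<Sum>j<m. A j a0 * ((\<Sum>b\<in>carrier G. B j b * B i b) * (\<Sum>g\<in>carrier G. C j g * C i g)))
        - 2 * (\<Sum>b\<in>carrier G. C i (a0 \<otimes>\<^bsub>G\<^esub> b) * B i b))"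
proof -
  interpret group G by fact
  have e1: "(\<Sum>b\<in>carrier G. \<Sum>g\<in>carrier G. f_HD m (A, B, C) a0 b g * (C i g * B i b))
      = (\<Sum>j<m. A j a0 * ((\<Sum>b\<in>carrier G. B j b * B i b) * (\<Sum>g\<in>carrier G. C j g * C i g)))"
    unfolding f_HD_def prod.case
    using triple[of B C "\<lambda>j. A j a0" "{..<m}" i "carrier G" "carrier G"] by (simp add: mult_ac)
  have e2: "(\<Sum>b\<in>carrier G. \<Sum>g\<in>carrier G. (if g = a0 \<otimes>\<^bsub>G\<^esub> b then 1 else 0) * (C i g * B i b))
      = (\<Sum>b\<in>carrier G. C i (a0 \<otimes>\<^bsub>G\<^esub> b) * B i b)"
    using assms(3,4) by (auto simp: if10_mult sum.delta m_closed intro!: sum.cong)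
  have "(\<Sum>b\<in>carrier G. \<Sum>g\<in>carrier G. 2 * (f_HD m (A, B, C) a0 b g - (if g = a0 \<otimes>\<^bsub>G\<^esub> b then 1 else 0)) * (C i g * B i b))
     = 2 * (\<Sum>b\<in>carrier G. \<Sum>g\<in>carrier G. f_HD m (A, B, C) a0 b g * (C i g * B i b))
     - 2 * (\<Sum>b\<in>carrier G. \<Sum>g\<in>carrier G. (if g = a0 \<otimes>\<^bsub>G\<^esub> b then 1 else 0) * (C i g * B i b))"
    by (simp add: sum_distrib_left sum_subtractf left_diff_distrib right_diff_distrib mult.assoc del: mult_2 if10_mult)
  then show ?thesis using deriv_A[OF assms(2,3,4), of A B C] e1 e2 by simp
qed

lemma deriv_B':
  assumes "group G" "i < m" "finite (carrier G)" "b0 \<in> carrier G"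
  shows "deriv (\<lambda>t. loss G m (A, B(i := (B i)(b0 := t)), C)) (B i b0)
    = 1 / real (card (carrier G)) ^ 3 * (2 * (\<Sum>j<m. B j b0 * ((\<Sum>a\<in>carrier G. A j a * A i a) * (\<Sum>g\<in>carrier G. C j g * C i g)))
        - 2 * (\<Sum>a\<in>carrier G. A i a * C i (a \<otimes>\<^bsub>G\<^esub> b0)))"
proof -
  interpret group G by fact
  have e1: "(\<Sum>a\<in>carrier G. \<Sum>g\<in>carrier G. f_HD m (A, B, C) a b0 g * (C i g * A i a))
      = (\<Sum>j<m. B j b0 * ((\<Sum>a\<in>carrier G. A j a * A i a) * (\<Sum>g\<in>carrier G. C j g * C i g)))"
    unfolding f_HD_def prod.case
    using triple[of A C "\<lambda>j. B j b0" "{..<m}" i "carrier G" "carrier G"] by (simp add: mult_ac)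
  have e2: "(\<Sum>a\<in>carrier G. \<Sum>g\<in>carrier G. (if g = a \<otimes>\<^bsub>G\<^esub> b0 then 1 else 0) * (C i g * A i a))
      = (\<Sum>a\<in>carrier G. A i a * C i (a \<otimes>\<^bsub>G\<^esub> b0))"
    using assms(3,4) by (auto simp: if10_mult sum.delta m_closed intro!: sum.cong)
  have "(\<Sum>a\<in>carrier G. \<Sum>g\<in>carrier G. 2 * (f_HD m (A, B, C) a b0 g - (if g = a \<otimes>\<^bsub>G\<^esub> b0 then 1 else 0)) * (C i g * A i a))
     = 2 * (\<Sum>a\<in>carrier G. \<Sum>g\<in>carrier G. f_HD m (A, B, C) a b0 g * (C i g * A i a))
     - 2 * (\<Sum>a\<in>carrier G. \<Sum>g\<in>carrier G. (if g = a \<otimes>\<^bsub>G\<^esub> b0 then 1 else 0) * (C i g * A i a))"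
    by (simp add: sum_distrib_left sum_subtractf left_diff_distrib right_diff_distrib mult.assoc del: mult_2 if10_mult)
  then show ?thesis using deriv_B[OF assms(2,3,4), of A B C] e1 e2 by simp
qed

lemma deriv_C':
  assumes "group G" "i < m" "finite (carrier G)" "g0 \<in> carrier G"
  shows "deriv (\<lambda>t. loss G m (A, B, C(i := (C i)(g0 := t)))) (C i g0)
    = 1 / real (card (carrier G)) ^ 3 * (2 * (\<Sum>j<m. C j g0 * ((\<Sum>a\<in>carrier G. A j a * A i a) * (\<Sum>b\<in>carrier G. B j b * B i b)))
        - 2 * (\<Sum>a\<in>carrier G. A i a * B i (inv\<^bsub>G\<^esub> a \<otimes>\<^bsub>G\<^esub> g0)))"
proof -
  interpret group G by fact
  have e1: "(\<Sum>a\<in>carrier G. \<Sum>b\<in>carrier G. f_HD m (A, B, C) a b g0 * (A i a * B i b))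
      = (\<Sum>j<m. C j g0 * ((\<Sum>a\<in>carrier G. A j a * A i a) * (\<Sum>b\<in>carrier G. B j b * B i b)))"
    unfolding f_HD_def prod.case
    using triple[of A B "\<lambda>j. C j g0" "{..<m}" i "carrier G" "carrier G"] by (simp add: mult_ac)
  have e2: "(\<Sum>a\<in>carrier G. \<Sum>b\<in>carrier G. (if g0 = a \<otimes>\<^bsub>G\<^esub> b then 1 else 0) * (A i a * B i b))
      = (\<Sum>a\<in>carrier G. A i a * B i (inv\<^bsub>G\<^esub> a \<otimes>\<^bsub>G\<^esub> g0))"
  proof (rule sum.cong[OF refl])
    fix a assume a: "a \<in> carrier G"
    have "(\<Sum>b\<in>carrier G. (if g0 = a \<otimes>\<^bsub>G\<^esub> b then 1 else 0) * (A i a * B i b))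
        = (\<Sum>b\<in>carrier G. if b = inv\<^bsub>G\<^esub> a \<otimes>\<^bsub>G\<^esub> g0 then A i a * B i b else 0)"
      by (rule sum.cong[OF refl]) (use a assms(4) in \<open>auto simp: inv_solve_left m_assoc[symmetric]\<close>)
    also have "\<dots> = A i a * B i (inv\<^bsub>G\<^esub> a \<otimes>\<^bsub>G\<^esub> g0)"
      using a assms(3,4) by (simp add: sum.delta)
    finally show "(\<Sum>b\<in>carrier G. (if g0 = a \<otimes>\<^bsub>G\<^esub> b then 1 else 0) * (A i a * B i b)) = A i a * B i (inv\<^bsub>G\<^esub> a \<otimes>\<^bsub>G\<^esub> g0)" .
  qed
  have "(\<Sum>a\<in>carrier G. \<Sum>b\<in>carrier G. 2 * (f_HD m (A, B, C) a b g0 - (if g0 = a \<otimes>\<^bsub>G\<^esub> b then 1 else 0)) * (A i a * B i b))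
     = 2 * (\<Sum>a\<in>carrier G. \<Sum>b\<in>carrier G. f_HD m (A, B, C) a b g0 * (A i a * B i b))
     - 2 * (\<Sum>a\<in>carrier G. \<Sum>b\<in>carrier G. (if g0 = a \<otimes>\<^bsub>G\<^esub> b then 1 else 0) * (A i a * B i b))"
    by (simp add: sum_distrib_left sum_subtractf left_diff_distrib right_diff_distrib mult.assoc del: mult_2 if10_mult)
  then show ?thesis using deriv_C[OF assms(2,3,4), of A B C] e1 e2 by simp
qed


lemma upd_R:
  assumes "in_R G d \<rho> X" "in_R G d \<rho> L" "in_R G d \<rho> V"
    "\<And>a. a \<in> carrier G \<Longrightarrow> D a = c * (2 * L a - 2 * V a)"
  shows "in_R G d \<rho> (\<lambda>a. X a - \<eta> * D a)"
proof -
  have "in_R G d \<rho> (\<lambda>a. X a - (\<eta> * c * 2) * (L a - V a))"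
    by (intro in_R_diff in_R_scale assms(1-3))
  then show ?thesis by (rule in_R_cong) (simp add: assms(4) algebra_simps)
qed

lemma upd_P:
  assumes "in_Rperp G d \<rho> X" "in_Rperp G d \<rho> L" "in_Rperp G d \<rho> V"
    "\<And>a. a \<in> carrier G \<Longrightarrow> D a = c * (2 * L a - 2 * V a)"
  shows "in_Rperp G d \<rho> (\<lambda>a. X a - \<eta> * D a)"
proof -
  have "in_Rperp G d \<rho> (\<lambda>a. X a - (\<eta> * c * 2) * (L a - V a))"
    by (intro in_Rperp_diff in_Rperp_scale assms(1-3))
  then show ?thesis by (rule in_Rperp_cong) (simp add: assms(4) algebra_simps)
qed

lemma lin_R:
  fixes S1 S2 :: "nat set"
  assumes "S1 \<union> S2 = {..<m}" "\<And>j. j \<in> S1 \<Longrightarrow> in_R G d \<rho> (X j)" "\<And>j. j \<in> S2 \<Longrightarrow> K j = 0"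
  shows "in_R G d \<rho> (\<lambda>a. \<Sum>j<m. X j a * K j)"
proof (rule in_R_sum[where S="{..<m}" and v="\<lambda>j a. X j a * K j", simplified])
  fix j assume "j < m"
  then have "j \<in> S1 \<or> j \<in> S2" using assms(1) by auto
  then show "in_R G d \<rho> (\<lambda>a. X j a * K j)"
    using assms(2,3) in_R_scale' in_R_zero by fastforce
qed

lemma lin_P:
  fixes S1 S2 :: "nat set"
  assumes "S1 \<union> S2 = {..<m}" "\<And>j. j \<in> S2 \<Longrightarrow> in_Rperp G d \<rho> (X j)" "\<And>j. j \<in> S1 \<Longrightarrow> K j = 0"
  shows "in_Rperp G d \<rho> (\<lambda>a. \<Sum>j<m. X j a * K j)"
proof (rule in_Rperp_sum[where S="{..<m}" and v="\<lambda>j a. X j a * K j", simplified])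
  fix j assume "j < m"
  then have "j \<in> S1 \<or> j \<in> S2" using assms(1) by auto
  then show "in_Rperp G d \<rho> (\<lambda>a. X j a * K j)"
    using assms(2,3) in_Rperp_scale' in_Rperp_zero by fastforce
qed

lemma step:
  assumes grp: "group G" and fin: "finite (carrier G)" and rep: "is_rep G d \<rho>"
    and U: "S1 \<union> S2 = {..<m}" and rs: "rows_split G d \<rho> S1 S2 W"
  shows "rows_split G d \<rho> S1 S2 (GD G m \<eta> W)"
proof -
  obtain A B C where W: "W = (A, B, C)" by (cases W)
  from rs have R1: "\<And>i. i \<in> S1 \<Longrightarrow> in_R G d \<rho> (A i) \<and> in_R G d \<rho> (B i) \<and> in_R G d \<rho> (C i)"
    and R2: "\<And>i. i \<in> S2 \<Longrightarrow> in_Rperp G d \<rho> (A i) \<and> in_Rperp G d \<rho> (B i) \<and> in_Rperp G d \<rho> (C i)"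
    by (simp_all add: rows_split_def W)
  have oR: "(\<Sum>x\<in>carrier G. X j x * X i x) = 0"
    if "i \<in> S1" "j \<in> S2" "\<And>k. k \<in> S1 \<Longrightarrow> in_R G d \<rho> (X k)" "\<And>k. k \<in> S2 \<Longrightarrow> in_Rperp G d \<rho> (X k)"
    for X :: "nat \<Rightarrow> 'a \<Rightarrow> real" and i j
    using perp_orth[OF that(4)[OF that(2)] that(3)[OF that(1)]] .
  have oP: "(\<Sum>x\<in>carrier G. X j x * X i x) = 0"
    if "i \<in> S2" "j \<in> S1" "\<And>k. k \<in> S1 \<Longrightarrow> in_R G d \<rho> (X k)" "\<And>k. k \<in> S2 \<Longrightarrow> in_Rperp G d \<rho> (X k)"
    for X :: "nat \<Rightarrow> 'a \<Rightarrow> real" and i j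
    using perp_orth'[OF that(4)[OF that(1)] that(3)[OF that(2)]] .
  have AR: "\<And>k. k \<in> S1 \<Longrightarrow> in_R G d \<rho> (A k)" "\<And>k. k \<in> S2 \<Longrightarrow> in_Rperp G d \<rho> (A k)"
   and BR: "\<And>k. k \<in> S1 \<Longrightarrow> in_R G d \<rho> (B k)" "\<And>k. k \<in> S2 \<Longrightarrow> in_Rperp G d \<rho> (B k)"
   and CR: "\<And>k. k \<in> S1 \<Longrightarrow> in_R G d \<rho> (C k)" "\<And>k. k \<in> S2 \<Longrightarrow> in_Rperp G d \<rho> (C k)"
    using R1 R2 by auto
  show ?thesis unfolding W GD_def prod.case rows_split_def
  proof (intro conjI ballI)
    fix i assume i: "i \<in> S1"
    then have im: "i < m" using U by auto
    have oA: "\<And>j. j \<in> S2 \<Longrightarrow> (\<Sum>x\<in>carrier G. A j x * A i x) = 0"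
      by (rule perp_orth[OF AR(2) AR(1)[OF i]])
    have oB: "\<And>j. j \<in> S2 \<Longrightarrow> (\<Sum>x\<in>carrier G. B j x * B i x) = 0"
      by (rule perp_orth[OF BR(2) BR(1)[OF i]])
    show "in_R G d \<rho> (\<lambda>a. A i a - \<eta> * deriv (\<lambda>t. loss G m (A(i := (A i)(a := t)), B, C)) (A i a))"
      apply (rule upd_R[OF _ _ _ deriv_A'[OF grp im fin]])
        apply (rule AR(1)[OF i])
       apply (rule lin_R[OF U])
        apply (simp add: AR BR CR)
       apply (simp add: oB)
      apply (rule convA_R[OF grp fin rep CR(1)[OF i]])
      by assumption
    show "in_R G d \<rho> (\<lambda>a. B i a - \<eta> * deriv (\<lambda>t. loss G m (A, B(i := (B i)(a := t)), C)) (B i a))"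
      apply (rule upd_R[OF _ _ _ deriv_B'[OF grp im fin]])
        apply (rule BR(1)[OF i])
       apply (rule lin_R[OF U])
        apply (simp add: AR BR CR)
       apply (simp add: oA)
      apply (rule convB_R[OF grp fin rep CR(1)[OF i]])
      by assumption
    show "in_R G d \<rho> (\<lambda>a. C i a - \<eta> * deriv (\<lambda>t. loss G m (A, B, C(i := (C i)(a := t)))) (C i a))"
      apply (rule upd_R[OF _ _ _ deriv_C'[OF grp im fin]])
        apply (rule CR(1)[OF i])
       apply (rule lin_R[OF U])
        apply (simp add: AR BR CR)
       apply (simp add: oA)
      apply (rule convC_R[OF grp fin rep BR(1)[OF i]])
      by assumption
  next
    fix i assume i: "i \<in> S2"
    then have im: "i < m" using U by auto
    have oA: "\<And>j. j \<in> S1 \<Longrightarrow> (\<Sum>x\<in>carrier G. A j x * A i x) = 0"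
      by (rule perp_orth'[OF AR(2)[OF i] AR(1)])
    have oB: "\<And>j. j \<in> S1 \<Longrightarrow> (\<Sum>x\<in>carrier G. B j x * B i x) = 0"
      by (rule perp_orth'[OF BR(2)[OF i] BR(1)])
    show "in_Rperp G d \<rho> (\<lambda>a. A i a - \<eta> * deriv (\<lambda>t. loss G m (A(i := (A i)(a := t)), B, C)) (A i a))"
      apply (rule upd_P[OF _ _ _ deriv_A'[OF grp im fin]])
        apply (rule AR(2)[OF i])
       apply (rule lin_P[OF U])
        apply (simp add: AR BR CR)
       apply (simp add: oB)
      apply (rule convA_P[OF grp fin rep CR(2)[OF i]])
      by assumption
    show "in_Rperp G d \<rho> (\<lambda>a. B i a - \<eta> * deriv (\<lambda>t. loss G m (A, B(i := (B i)(a := t)), C)) (B i a))"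
      apply (rule upd_P[OF _ _ _ deriv_B'[OF grp im fin]])
        apply (rule BR(2)[OF i])
       apply (rule lin_P[OF U])
        apply (simp add: AR BR CR)
       apply (simp add: oA)
      apply (rule convB_P[OF grp fin rep CR(2)[OF i]])
      by assumption
    show "in_Rperp G d \<rho> (\<lambda>a. C i a - \<eta> * deriv (\<lambda>t. loss G m (A, B, C(i := (C i)(a := t)))) (C i a))"
      apply (rule upd_P[OF _ _ _ deriv_C'[OF grp im fin]])
        apply (rule CR(2)[OF i])
       apply (rule lin_P[OF U])
        apply (simp add: AR BR CR)
       apply (simp add: oA)
      apply (rule convC_P[OF grp fin rep BR(2)[OF i]])
      by assumption
  qed
qed

theorem mainTheorem13:
  fixes G :: "('a, 'b) monoid_scheme" and d m :: nat and \<rho> :: "'a \<Rightarrow> complex mat"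
    and S1 S2 :: "nat set" and W :: "'a weights" and \<eta> :: real
  assumes "group G" and "finite (carrier G)"
    and "is_rep G d \<rho>" and "self_conjugate G d \<rho>"
    and "S1 \<union> S2 = {..<m}" and "S1 \<inter> S2 = {}"
    and "rows_split G d \<rho> S1 S2 W"
    and "\<eta> > 0"
  shows "rows_split G d \<rho> S1 S2 (GD G m \<eta> W) \<and>
         (\<forall>t::nat. rows_split G d \<rho> S1 S2 ((GD G m \<eta> ^^ t) W))"
proof
  show "rows_split G d \<rho> S1 S2 (GD G m \<eta> W)"
    by (rule step[OF assms(1,2,3,5,7)])
  show "\<forall>t::nat. rows_split G d \<rho> S1 S2 ((GD G m \<eta> ^^ t) W)"
  proof
    fix t :: nat
    show "rows_split G d \<rho> S1 S2 ((GD G m \<eta> ^^ t) W)"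
      by (induction t) (simp_all add: assms(7) step[OF assms(1,2,3,5)])
  qed
qed

end
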